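(* For one-sided matching with $n$ agents and $n$ items and unrestricted nonnegative valuations, there are deterministic algorithms achieving each of the following: (i) distortion $O(n)$ using one value query per agent; (ii) for any constant integer $k\ge1$, distortion $O(n^{1/k})$ using $O(\log n)$ queries per agent; (iii) distortion $O(1)$ using $O(\log^2 n)$ queries per agent.
   Context: One-sided matching: there is a set $N$ of $n$ agents and a set $A$ of $n$ items. Each agent $i$ has a valuation function $v_i:A\to\mathbb{R}_{\ge0}$. The algorithm receives the agents' rankings of the items consistent with their values (if $a\succ_i b$ then $v_i(a)\ge v_i(b)$). It may ask value queries returning $v_i(j)$, and it outputs a perfect matching (bijection $N\to A$). Its distortion is the worst case, over all valuation profiles, of the optimal social welfare $\max_Z\sum_i v_i(z_i)$ divided by the social welfare $\sum_i v_i(y_i)$ of the output matching. *)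

theory Defs
  imports Complex_Main
begin

text \<open>Agents and items are both \<open>{0..<n}\<close>. A valuation profile is
  \<open>v :: nat \<Rightarrow> nat \<Rightarrow> real\<close>, where \<open>v i j\<close> is agent i's value for item j.
  A ranking profile \<open>\<sigma>\<close> gives for each agent i a bijection \<open>\<sigma> i\<close> from positions
  to items (\<open>\<sigma> i 0\<close> is the top item).\<close>

definition valid_valuation :: "nat \<Rightarrow> (nat \<Rightarrow> nat \<Rightarrow> real) \<Rightarrow> bool" where
  "valid_valuation n v \<longleftrightarrow> (\<forall>i<n. \<forall>j<n. 0 \<le> v i j)"

definition consistent_ranking :: "nat \<Rightarrow> (nat \<Rightarrow> nat \<Rightarrow> real) \<Rightarrow> (nat \<Rightarrow> nat \<Rightarrow> nat) \<Rightarrow> bool" where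
  "consistent_ranking n v \<sigma> \<longleftrightarrow>
     (\<forall>i<n. bij_betw (\<sigma> i) {0..<n} {0..<n} \<and>
            (\<forall>p q. p < q \<and> q < n \<longrightarrow> v i (\<sigma> i q) \<le> v i (\<sigma> i p)))"

definition is_matching :: "nat \<Rightarrow> (nat \<Rightarrow> nat) \<Rightarrow> bool" where
  "is_matching n m \<longleftrightarrow> bij_betw m {0..<n} {0..<n}"

definition social_welfare :: "nat \<Rightarrow> (nat \<Rightarrow> nat \<Rightarrow> real) \<Rightarrow> (nat \<Rightarrow> nat) \<Rightarrow> real" where
  "social_welfare n v m = (\<Sum>i<n. v i (m i))"

definition opt_welfare :: "nat \<Rightarrow> (nat \<Rightarrow> nat \<Rightarrow> real) \<Rightarrow> real" where
  "opt_welfare n v = Max {social_welfare n v m | m. is_matching n m}"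

text \<open>Deterministic adaptive value-query algorithms as decision trees:
  either output a matching, or query \<open>v i j\<close> and continue depending on the answer.\<close>

datatype qalg = Output "nat \<Rightarrow> nat" | Query nat nat "real \<Rightarrow> qalg"

primrec run :: "qalg \<Rightarrow> (nat \<Rightarrow> nat \<Rightarrow> real) \<Rightarrow> (nat \<Rightarrow> nat)" where
  "run (Output m) v = m"
| "run (Query i j f) v = run (f (v i j)) v"

primrec queries :: "qalg \<Rightarrow> (nat \<Rightarrow> nat \<Rightarrow> real) \<Rightarrow> (nat \<times> nat) list" where
  "queries (Output m) v = []"
| "queries (Query i j f) v = (i, j) # queries (f (v i j)) v"

definition queries_to :: "qalg \<Rightarrow> (nat \<Rightarrow> nat \<Rightarrow> real) \<Rightarrow> nat \<Rightarrow> nat" where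
  "queries_to t v i = length (filter (\<lambda>q. fst q = i) (queries t v))"

text \<open>An algorithm for size n maps the ranking profile to a decision tree.\<close>

definition achieves :: "nat \<Rightarrow> ((nat \<Rightarrow> nat \<Rightarrow> nat) \<Rightarrow> qalg) \<Rightarrow> real \<Rightarrow> real \<Rightarrow> bool" where
  "achieves n A d q \<longleftrightarrow>
     (\<forall>v \<sigma>. valid_valuation n v \<and> consistent_ranking n v \<sigma> \<longrightarrow>
        is_matching n (run (A \<sigma>) v) \<and>
        opt_welfare n v \<le> d * social_welfare n v (run (A \<sigma>) v) \<and>
        (\<forall>i. real (queries_to (A \<sigma>) v i) \<le> q))"

end

theory Submission
  imports Defs "HOL-Library.FuncSet"
begin


definition goodv :: "(nat\<Rightarrow>nat\<Rightarrow>real) \<Rightarrow> (('r \<Rightarrow> qalg) \<Rightarrow> qalg) \<Rightarrow> ('r \<Rightarrow> bool) \<Rightarrow> (nat \<Rightarrow> nat) \<Rightarrow> bool" where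
"goodv v P \<Phi> c \<longleftrightarrow> (\<forall>k. \<exists>x qs. \<Phi> x \<and> run (P k) v = run (k x) v \<and> queries (P k) v = qs @ queries (k x) v
   \<and> (\<forall>j. length (filter (\<lambda>q. fst q = j) qs) \<le> c j))"

primrec allp :: "(nat \<Rightarrow> ('r \<Rightarrow> qalg) \<Rightarrow> qalg) \<Rightarrow> nat \<Rightarrow> ((nat \<Rightarrow> 'r) \<Rightarrow> qalg) \<Rightarrow> qalg" where
"allp P 0 k = k (\<lambda>_. undefined)"
| "allp P (Suc m) k = allp P m (\<lambda>f. P m (\<lambda>x. k (f(m:=x))))"

lemma allp_good:
  "(\<forall>l<m. goodv v (P l) (\<Phi> l) (c l)) \<Longrightarrow> goodv v (allp P m) (\<lambda>R. \<forall>l<m. \<Phi> l (R l)) (\<lambda>j. \<Sum>l<m. c l j)"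
proof (induction m)
  case 0
  then show ?case unfolding goodv_def by (intro allI exI[of _ "\<lambda>_. undefined"] exI[of _ "[]"]) auto
next
  case (Suc m)
  show ?case unfolding goodv_def
  proof
    fix k
    define k' where "k' = (\<lambda>f. P m (\<lambda>x. k (f(m:=x))))"
    from Suc have "goodv v (allp P m) (\<lambda>R. \<forall>l<m. \<Phi> l (R l)) (\<lambda>j. \<Sum>l<m. c l j)" by auto
    then obtain R qs1 where R: "\<forall>l<m. \<Phi> l (R l)" "run (allp P m k') v = run (k' R) v"
      "queries (allp P m k') v = qs1 @ queries (k' R) v" "\<forall>j. length (filter (\<lambda>q. fst q = j) qs1) \<le> (\<Sum>l<m. c l j)"
      unfolding goodv_def by blast
    from Suc.prems have "goodv v (P m) (\<Phi> m) (c m)" by auto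
    then obtain x qs2 where X: "\<Phi> m x" "run (P m (\<lambda>x. k (R(m:=x)))) v = run (k (R(m:=x))) v"
      "queries (P m (\<lambda>x. k (R(m:=x)))) v = qs2 @ queries (k (R(m:=x))) v"
      "\<forall>j. length (filter (\<lambda>q. fst q = j) qs2) \<le> c m j"
      unfolding goodv_def by blast
    show "\<exists>x qs. (\<forall>l<Suc m. \<Phi> l (x l)) \<and> run (allp P (Suc m) k) v = run (k x) v \<and>
          queries (allp P (Suc m) k) v = qs @ queries (k x) v \<and> (\<forall>j. length (filter (\<lambda>q. fst q = j) qs) \<le> (\<Sum>l<Suc m. c l j))"
    proof (intro exI[of _ "R(m:=x)"] exI[of _ "qs1 @ qs2"] conjI allI impI)
      fix l assume "l < Suc m" then show "\<Phi> l ((R(m := x)) l)" using R(1) X(1) by (cases "l = m") auto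
    next
      show "run (allp P (Suc m) k) v = run (k (R(m := x))) v" using R(2) X(2) by (simp add: k'_def)
    next
      show "queries (allp P (Suc m) k) v = (qs1 @ qs2) @ queries (k (R(m := x))) v" using R(3) X(3) by (simp add: k'_def)
    next
      fix j show "length (filter (\<lambda>q. fst q = j) (qs1 @ qs2)) \<le> (\<Sum>l<Suc m. c l j)"
        using R(4) X(4) by (simp add: add_mono)
    qed
  qed
qed

function bs :: "nat \<Rightarrow> (nat \<Rightarrow> nat) \<Rightarrow> real \<Rightarrow> nat \<Rightarrow> nat \<Rightarrow> (nat \<Rightarrow> qalg) \<Rightarrow> qalg" where
"bs i s th lo hi k = (if hi \<le> lo then k lo else Query i (s ((lo+hi) div 2))
   (\<lambda>x. if x < th then bs i s th lo ((lo+hi) div 2) k else bs i s th (Suc ((lo+hi) div 2)) hi k))"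
  by pat_completeness auto
termination by (relation "measure (\<lambda>(i,s,th,lo,hi,k). hi - lo)") auto

declare bs.simps[simp del]

lemma bs_base: "hi \<le> lo \<Longrightarrow> bs i s th lo hi k = k lo"
  by (subst bs.simps) simp

lemma bs_spec:
  shows "(\<forall>p q. p < q \<longrightarrow> q < n \<longrightarrow> v i (s q) \<le> v i (s p)) \<Longrightarrow> lo \<le> hi \<Longrightarrow> hi \<le> n \<Longrightarrow> hi - lo < 2^L \<Longrightarrow> (\<forall>q<lo. th \<le> v i (s q)) \<Longrightarrow>
    (\<forall>q. hi \<le> q \<longrightarrow> q < n \<longrightarrow> \<not> th \<le> v i (s q)) \<Longrightarrow>
    \<exists>c qs. c \<le> n \<and> (\<forall>q<n. q < c \<longleftrightarrow> th \<le> v i (s q)) \<and> run (bs i s th lo hi k) v = run (k c) v \<and>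
      queries (bs i s th lo hi k) v = qs @ queries (k c) v \<and> (\<forall>q\<in>set qs. fst q = i) \<and> length qs \<le> L"
proof (induction i s th lo hi k arbitrary: L rule: bs.induct)
  case (1 i s th lo hi k)
  show ?case
  proof (cases "hi \<le> lo")
    case True
    then have "hi = lo" using 1(4) by simp
    then show ?thesis using 1(4-8) True
      by (intro exI[of _ lo] exI[of _ "[]"]) (auto simp: bs_base not_le)
  next
    case False
    define mid where "mid = (lo+hi) div 2"
    obtain L' where L: "L = Suc L'" using 1(6) False by (cases L) auto
    have d1: "mid - lo < 2^L'" "hi - Suc mid < 2^L'" using 1(6) False unfolding mid_def L by auto
    have mlt: "lo \<le> mid" "mid < hi" using False unfolding mid_def by auto
    show ?thesis
    proof (cases "v i (s mid) < th")
      case True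
      have inv: "\<forall>q. mid \<le> q \<longrightarrow> q < n \<longrightarrow> \<not> th \<le> v i (s q)"
      proof (intro allI impI)
        fix q assume q: "mid \<le> q" "q < n"
        show "\<not> th \<le> v i (s q)"
        proof (cases "q = mid")
          case False
          then have "mid < q" using q by simp
          then have "v i (s q) \<le> v i (s mid)" using 1(3) q by blast
          then show ?thesis using True by auto
        qed (use True in auto)
      qed
      have mn: "mid \<le> n" using mlt 1(5) by simp
      from 1(1)[OF False True, folded mid_def, OF 1(3) mlt(1) mn d1(1) 1(7) inv]
      obtain c qs where C: "c \<le> n" "(\<forall>q<n. q < c \<longleftrightarrow> th \<le> v i (s q))" "run (bs i s th lo mid k) v = run (k c) v"
        "queries (bs i s th lo mid k) v = qs @ queries (k c) v" "(\<forall>q\<in>set qs. fst q = i)" "length qs \<le> L'" by blast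
      show ?thesis
      proof (intro exI[of _ c] exI[of _ "(i, s mid) # qs"] conjI)
        have e: "bs i s th lo hi k = Query i (s mid) (\<lambda>x. if x < th then bs i s th lo mid k else bs i s th (Suc mid) hi k)"
          using False unfolding mid_def by (subst bs.simps) simp
        show "run (bs i s th lo hi k) v = run (k c) v" unfolding e using True C(3) by simp
        show "queries (bs i s th lo hi k) v = ((i, s mid) # qs) @ queries (k c) v" unfolding e using True C(4) by simp
        show "c \<le> n" using C(1) .
        show "\<forall>q<n. q < c \<longleftrightarrow> th \<le> v i (s q)" using C(2) .
        show "\<forall>q\<in>set ((i, s mid) # qs). fst q = i" using C(5) by simp
        show "length ((i, s mid) # qs) \<le> L" using C(6) L by simp
      qed
    next
      case NT: False
      have inv: "\<forall>q<Suc mid. th \<le> v i (s q)"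
      proof (intro allI impI)
        fix q assume q: "q < Suc mid"
        show "th \<le> v i (s q)"
        proof (cases "q = mid")
          case False
          have "q < mid" using q False by simp
          moreover have "mid < n" using mlt 1(5) by simp
          ultimately have "v i (s mid) \<le> v i (s q)" using 1(3) by blast
          then show ?thesis using NT by auto
        qed (use NT in auto)
      qed
      have mn: "Suc mid \<le> hi" using mlt by simp
      from 1(2)[OF False NT, folded mid_def, OF 1(3) mn 1(5) d1(2) inv 1(8)]
      obtain c qs where C: "c \<le> n" "(\<forall>q<n. q < c \<longleftrightarrow> th \<le> v i (s q))" "run (bs i s th (Suc mid) hi k) v = run (k c) v"
        "queries (bs i s th (Suc mid) hi k) v = qs @ queries (k c) v" "(\<forall>q\<in>set qs. fst q = i)" "length qs \<le> L'" by blast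
      show ?thesis
      proof (intro exI[of _ c] exI[of _ "(i, s mid) # qs"] conjI)
        have e: "bs i s th lo hi k = Query i (s mid) (\<lambda>x. if x < th then bs i s th lo mid k else bs i s th (Suc mid) hi k)"
          using False unfolding mid_def by (subst bs.simps) simp
        show "run (bs i s th lo hi k) v = run (k c) v" unfolding e using NT C(3) by simp
        show "queries (bs i s th lo hi k) v = ((i, s mid) # qs) @ queries (k c) v" unfolding e using NT C(4) by simp
        show "c \<le> n" using C(1) .
        show "\<forall>q<n. q < c \<longleftrightarrow> th \<le> v i (s q)" using C(2) .
        show "\<forall>q\<in>set ((i, s mid) # qs). fst q = i" using C(5) by simp
        show "length ((i, s mid) # qs) \<le> L" using C(6) L by simp
      qed
    qed
  qed
qed

lemma bs_good:
  assumes mono: "\<And>p q. p < q \<Longrightarrow> q < n \<Longrightarrow> v i (s q) \<le> v i (s p)" and L: "n < 2^L"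
  shows "goodv v (bs i s th 0 n) (\<lambda>c. c \<le> n \<and> (\<forall>q<n. q < c \<longleftrightarrow> th \<le> v i (s q))) (\<lambda>j. if j = i then L else 0)"
  unfolding goodv_def
proof
  fix k
  have m: "\<forall>p q. p < q \<longrightarrow> q < n \<longrightarrow> v i (s q) \<le> v i (s p)" using mono by blast
  have p1: "n - 0 < 2^L" using L by simp
  have p2: "\<forall>q<0. th \<le> v i (s q)" by simp
  have p3: "\<forall>q. n \<le> q \<longrightarrow> q < n \<longrightarrow> \<not> th \<le> v i (s q)" by simp
  from bs_spec[of n v i s 0 n L th k, OF m le0 order.refl p1 p2 p3] obtain c qs where C: "c \<le> n" "(\<forall>q<n. q < c \<longleftrightarrow> th \<le> v i (s q))" "run (bs i s th 0 n k) v = run (k c) v"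
      "queries (bs i s th 0 n k) v = qs @ queries (k c) v" "(\<forall>q\<in>set qs. fst q = i)" "length qs \<le> L" by blast
  have "\<forall>j. length (filter (\<lambda>q. fst q = j) qs) \<le> (if j = i then L else 0)"
  proof
    fix j show "length (filter (\<lambda>q. fst q = j) qs) \<le> (if j = i then L else 0)"
    proof (cases "j = i")
      case True
      have "length (filter (\<lambda>q. fst q = j) qs) \<le> length qs" by (rule length_filter_le)
      then have "length (filter (\<lambda>q. fst q = j) qs) \<le> L" using C(6) by (rule le_trans)
      then show ?thesis using True by simp
    next
      case False then have "filter (\<lambda>q. fst q = j) qs = []" using C(5) by (auto simp: filter_empty_conv)
      then show ?thesis by simp
    qed
  qed
  then show "\<exists>x qs. (x \<le> n \<and> (\<forall>q<n. (q < x) = (th \<le> v i (s q)))) \<and> run (bs i s th 0 n k) v = run (k x) v \<and>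
      queries (bs i s th 0 n k) v = qs @ queries (k x) v \<and> (\<forall>j. length (filter (\<lambda>q. fst q = j) qs) \<le> (if j = i then L else 0))"
    using C by blast
qed



lemma matching_restrict:
  assumes "is_matching n m"
  shows "is_matching n (restrict m {0..<n})" "restrict m {0..<n} \<in> {0..<n} \<rightarrow>\<^sub>E {0..<n}"
proof -
  have b: "bij_betw m {0..<n} {0..<n}" using assms unfolding is_matching_def .
  show "is_matching n (restrict m {0..<n})" unfolding is_matching_def
    using b by (subst bij_betw_cong[where g=m]) auto
  show "restrict m {0..<n} \<in> {0..<n} \<rightarrow>\<^sub>E {0..<n}"
    using bij_betwE[OF b] by auto
qed

lemma matching_lt: "is_matching n m \<Longrightarrow> i < n \<Longrightarrow> m i < n"
  unfolding is_matching_def using bij_betwE by fastforce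

definition MS :: "nat \<Rightarrow> (nat \<Rightarrow> nat) set" where
  "MS n = {m \<in> {0..<n} \<rightarrow>\<^sub>E {0..<n}. is_matching n m}"

lemma MS_finite: "finite (MS n)"
  unfolding MS_def by (rule finite_subset[OF _ finite_PiE[of "{0..<n}" "\<lambda>_. {0..<n}"]]) auto

lemma MS_ne: "restrict id {0..<n} \<in> MS n"
proof -
  have "is_matching n id" unfolding is_matching_def by simp
  then show ?thesis using matching_restrict[of n id] unfolding MS_def by auto
qed

lemma sum_restrict: "(\<Sum>i<(n::nat). f i (restrict m {0..<n} i)) = (\<Sum>i<n. f i (m i))"
  by (intro sum.cong) (simp_all add: restrict_def)

lemma best_exists:
  "\<exists>m. is_matching n m \<and> (\<forall>m'. is_matching n m' \<longrightarrow> (\<Sum>i<n. f i (m' i)) \<le> (\<Sum>i<n. (f i (m i) :: real)))"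
proof -
  define F where "F m = (\<Sum>i<n. f i (m i))" for m
  have fin: "finite (F ` MS n)" using MS_finite by simp
  have ne: "F ` MS n \<noteq> {}" using MS_ne by auto
  obtain m where m: "m \<in> MS n" "F m = Max (F ` MS n)" using Max_in[OF fin ne] by auto
  show ?thesis
  proof (intro exI[of _ m] conjI allI impI)
    show "is_matching n m" using m unfolding MS_def by auto
    fix m' assume "is_matching n m'"
    then have "restrict m' {0..<n} \<in> MS n" using matching_restrict unfolding MS_def by auto
    then have "F (restrict m' {0..<n}) \<le> F m" using m Max_ge[OF fin] by auto
    then show "(\<Sum>i<n. f i (m' i)) \<le> (\<Sum>i<n. f i (m i))" unfolding F_def sum_restrict .
  qed
qed

lemma opt_set: "{social_welfare n v m | m. is_matching n m} = social_welfare n v ` MS n"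
proof
  show "{social_welfare n v m | m. is_matching n m} \<subseteq> social_welfare n v ` MS n"
  proof
    fix x assume "x \<in> {social_welfare n v m | m. is_matching n m}"
    then obtain m where m: "is_matching n m" "x = social_welfare n v m" by auto
    then have "restrict m {0..<n} \<in> MS n" using matching_restrict unfolding MS_def by auto
    moreover have "social_welfare n v (restrict m {0..<n}) = x" using m unfolding social_welfare_def
      using sum_restrict[of "\<lambda>i j. v i j"] by simp
    ultimately show "x \<in> social_welfare n v ` MS n" by (metis image_eqI)
  qed
  show "social_welfare n v ` MS n \<subseteq> {social_welfare n v m | m. is_matching n m}"
    unfolding MS_def by auto
qed

lemma opt_ge: "is_matching n m \<Longrightarrow> social_welfare n v m \<le> opt_welfare n v"
  unfolding opt_welfare_def opt_set using MS_finite
  by (metis (mono_tags, lifting) Max_ge finite_imageI mem_Collect_eq opt_set)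

lemma opt_attained: "\<exists>Z. is_matching n Z \<and> opt_welfare n v = social_welfare n v Z"
proof -
  have fin: "finite (social_welfare n v ` MS n)" using MS_finite by simp
  have ne: "social_welfare n v ` MS n \<noteq> {}" using MS_ne by auto
  show ?thesis using Max_in[OF fin ne] unfolding opt_welfare_def opt_set MS_def by auto
qed

definition swm :: "nat \<Rightarrow> nat \<Rightarrow> nat \<Rightarrow> nat" where
  "swm a c x = (if x = a then c else if x = c then a else x)"

lemma swm_matching: "a < n \<Longrightarrow> c < n \<Longrightarrow> is_matching n (swm a c)"
  unfolding is_matching_def
  by (rule bij_betw_byWitness[where f'="swm a c"]) (auto simp: swm_def)

lemma cons_bij: "consistent_ranking n v \<sigma> \<Longrightarrow> i < n \<Longrightarrow> bij_betw (\<sigma> i) {0..<n} {0..<n}"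
  unfolding consistent_ranking_def by auto

lemma cons_mono: "consistent_ranking n v \<sigma> \<Longrightarrow> i < n \<Longrightarrow> \<forall>p q. p < q \<longrightarrow> q < n \<longrightarrow> v i (\<sigma> i q) \<le> v i (\<sigma> i p)"
  unfolding consistent_ranking_def by auto

lemma top_ge_pos: "consistent_ranking n v \<sigma> \<Longrightarrow> i < n \<Longrightarrow> p < n \<Longrightarrow> v i (\<sigma> i p) \<le> v i (\<sigma> i 0)"
  using cons_mono[of n v \<sigma> i] by (cases p) auto

lemma top_ge: "consistent_ranking n v \<sigma> \<Longrightarrow> i < n \<Longrightarrow> j < n \<Longrightarrow> v i j \<le> v i (\<sigma> i 0)"
proof -
  assume c: "consistent_ranking n v \<sigma>" and i: "i < n" and j: "j < n"
  have "j \<in> \<sigma> i ` {0..<n}" using bij_betw_imp_surj_on[OF cons_bij[OF c i]] j by auto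
  then obtain p where "p < n" "j = \<sigma> i p" by auto
  then show ?thesis using top_ge_pos[OF c i] by auto
qed

lemma top_lt: "consistent_ranking n v \<sigma> \<Longrightarrow> i < n \<Longrightarrow> \<sigma> i 0 < n"
  using bij_betwE[OF cons_bij] by fastforce

lemma sw_ge_one: "valid_valuation n v \<Longrightarrow> is_matching n m \<Longrightarrow> a < n \<Longrightarrow> v a (m a) \<le> social_welfare n v m"
  unfolding social_welfare_def
  by (rule member_le_sum[where f="\<lambda>i. v i (m i)"]) (auto simp: valid_valuation_def matching_lt)

lemma sw_nonneg: "valid_valuation n v \<Longrightarrow> is_matching n m \<Longrightarrow> 0 \<le> social_welfare n v m"
  unfolding social_welfare_def by (rule sum_nonneg) (auto simp: valid_valuation_def matching_lt)

lemma opt_ge_top: "valid_valuation n v \<Longrightarrow> consistent_ranking n v \<sigma> \<Longrightarrow> i < n \<Longrightarrow> v i (\<sigma> i 0) \<le> opt_welfare n v"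
proof -
  assume a: "valid_valuation n v" "consistent_ranking n v \<sigma>" "i < n"
  have m: "is_matching n (swm i (\<sigma> i 0))" using swm_matching a top_lt by auto
  have "v i (\<sigma> i 0) = v i (swm i (\<sigma> i 0) i)" by (simp add: swm_def)
  also have "\<dots> \<le> social_welfare n v (swm i (\<sigma> i 0))" using sw_ge_one[OF a(1) m a(3)] .
  also have "\<dots> \<le> opt_welfare n v" using opt_ge[OF m] .
  finally show ?thesis .
qed

lemma opt_le_tops: "consistent_ranking n v \<sigma> \<Longrightarrow> opt_welfare n v \<le> (\<Sum>i<n. v i (\<sigma> i 0))"
proof -
  assume c: "consistent_ranking n v \<sigma>"
  obtain Z where Z: "is_matching n Z" "opt_welfare n v = social_welfare n v Z" using opt_attained by blast
  show ?thesis unfolding Z(2) social_welfare_def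
    by (rule sum_mono) (use top_ge[OF c] matching_lt[OF Z(1)] in auto)
qed

lemma sum_delta_le: "(\<Sum>l<(n::nat). (if j = l then c else 0::nat)) \<le> c"
  by (subst sum.delta') auto

lemma query_good: "goodv v (\<lambda>k. Query i j k) (\<lambda>y. y = v i j) (\<lambda>l. if l = i then 1 else 0)"
  unfolding goodv_def
  by (intro allI exI[of _ "v i j"] exI[of _ "[(i,j)]"]) auto

lemma queries_to_out: "queries (P k) v = qs @ queries (k x) v \<Longrightarrow> (\<And>x. \<exists>m. k x = Output m) \<Longrightarrow>
   queries_to (P k) v j = length (filter (\<lambda>q. fst q = j) qs)"
  unfolding queries_to_def by (metis append.right_neutral queries.simps(1))



definition topA :: "nat \<Rightarrow> (nat \<Rightarrow> nat \<Rightarrow> nat) \<Rightarrow> qalg" where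
  "topA n \<sigma> = allp (\<lambda>i k. Query i (\<sigma> i 0) k) n
     (\<lambda>R. Output (let a = (SOME a. a < n \<and> (\<forall>i<n. R i \<le> R a)) in swm a (\<sigma> a 0)))"

lemma topA_ach: "1 \<le> n \<Longrightarrow> achieves n (topA n) (real n) 1"
  unfolding achieves_def
proof (intro allI impI)
  fix v \<sigma> assume a: "valid_valuation n v \<and> consistent_ranking n v \<sigma>"
  then have val: "valid_valuation n v" and con: "consistent_ranking n v \<sigma>" by auto
  assume n: "1 \<le> n"
  have "goodv v (allp (\<lambda>i k. Query i (\<sigma> i 0) k) n) (\<lambda>R. \<forall>l<n. R l = v l (\<sigma> l 0)) (\<lambda>j. \<Sum>l<n. if j = l then 1 else 0)"
    using allp_good[of n v "\<lambda>i k. Query i (\<sigma> i 0) k" "\<lambda>l y. y = v l (\<sigma> l 0)" "\<lambda>l j. if j = l then 1 else 0"]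
      query_good[of v] by (simp add: eq_commute)
  then obtain R qs where R: "\<forall>l<n. R l = v l (\<sigma> l 0)"
    "run (topA n \<sigma>) v = run (Output (let a = (SOME a. a < n \<and> (\<forall>i<n. R i \<le> R a)) in swm a (\<sigma> a 0))) v"
    "queries (topA n \<sigma>) v = qs @ queries (Output (let a = (SOME a. a < n \<and> (\<forall>i<n. R i \<le> R a)) in swm a (\<sigma> a 0))) v"
    "\<forall>j. length (filter (\<lambda>q. fst q = j) qs) \<le> (\<Sum>l<n. if j = l then 1 else 0)"
    unfolding goodv_def topA_def by blast
  define a where "a = (SOME a. a < n \<and> (\<forall>i<n. R i \<le> R a))"
  have ex: "\<exists>a. a < n \<and> (\<forall>i<n. R i \<le> R a)"
  proof -
    have fin: "finite (R ` {..<n})" by simp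
    have ne: "R ` {..<n} \<noteq> {}" using n by (auto simp: lessThan_empty_iff)
    obtain a where "a < n" "R a = Max (R ` {..<n})" using Max_in[OF fin ne] by auto
    then show ?thesis using Max_ge[OF fin] by auto
  qed
  have aa: "a < n" "\<forall>i<n. R i \<le> R a" using someI_ex[OF ex] unfolding a_def by auto
  have run: "run (topA n \<sigma>) v = swm a (\<sigma> a 0)" using R(2) unfolding a_def by (simp add: Let_def)
  have M: "is_matching n (swm a (\<sigma> a 0))" using swm_matching aa(1) top_lt[OF con aa(1)] by auto
  have g1: "is_matching n (run (topA n \<sigma>) v)" using M run by simp
  have "opt_welfare n v \<le> (\<Sum>i<n. v i (\<sigma> i 0))" by (rule opt_le_tops[OF con])
  also have "\<dots> \<le> of_nat (card {..<n}) * v a (\<sigma> a 0)"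
    by (rule sum_bounded_above) (use aa R(1) in auto)
  also have "\<dots> = real n * v a (swm a (\<sigma> a 0) a)" by (simp add: swm_def)
  also have "\<dots> \<le> real n * social_welfare n v (swm a (\<sigma> a 0))"
    by (rule mult_left_mono[OF sw_ge_one[OF val M aa(1)]]) simp
  finally have g2: "opt_welfare n v \<le> real n * social_welfare n v (run (topA n \<sigma>) v)" using run by simp
  have g3: "real (queries_to (topA n \<sigma>) v j) \<le> 1" for j
  proof -
    have "queries_to (topA n \<sigma>) v j = length (filter (\<lambda>q. fst q = j) qs)"
      using R(3) unfolding queries_to_def by simp
    also have "\<dots> \<le> 1" using R(4) sum_delta_le[where n=n and j=j and c=1] by (meson le_trans)
    finally show "real (queries_to (topA n \<sigma>) v j) \<le> 1" by simp
  qed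
  show "is_matching n (run (topA n \<sigma>) v) \<and> opt_welfare n v \<le> real n * social_welfare n v (run (topA n \<sigma>) v) \<and> (\<forall>i. real (queries_to (topA n \<sigma>) v i) \<le> 1)"
    using g1 g2 g3 by blast
qed



definition agentP :: "nat \<Rightarrow> real \<Rightarrow> nat \<Rightarrow> (nat \<Rightarrow> nat) \<Rightarrow> nat \<Rightarrow> ((real \<times> (nat \<Rightarrow> nat)) \<Rightarrow> qalg) \<Rightarrow> qalg" where
  "agentP n b S s i k = Query i (s 0) (\<lambda>y. allp (\<lambda>l. bs i s (y / b^l) 0 n) (Suc S) (\<lambda>cs. k (y, cs)))"

definition PhiA :: "(nat \<Rightarrow> nat \<Rightarrow> real) \<Rightarrow> nat \<Rightarrow> real \<Rightarrow> nat \<Rightarrow> (nat \<Rightarrow> nat) \<Rightarrow> nat \<Rightarrow> (real \<times> (nat \<Rightarrow> nat)) \<Rightarrow> bool" where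
  "PhiA v n b S s i r \<longleftrightarrow> fst r = v i (s 0) \<and>
     (\<forall>l<Suc S. snd r l \<le> n \<and> (\<forall>q<n. q < snd r l \<longleftrightarrow> fst r / b^l \<le> v i (s q)))"

lemma agent_good:
  assumes mono: "\<forall>p q. p < q \<longrightarrow> q < n \<longrightarrow> v i (s q) \<le> v i (s p)" and L: "n < 2^L"
  shows "goodv v (agentP n b S s i) (PhiA v n b S s i) (\<lambda>j. if j = i then Suc (Suc S * L) else 0)"
  unfolding goodv_def
proof
  fix k
  define y where "y = v i (s 0)"
  have "\<forall>l<Suc S. goodv v (bs i s (y / b^l) 0 n) (\<lambda>c. c \<le> n \<and> (\<forall>q<n. q < c \<longleftrightarrow> y / b^l \<le> v i (s q))) (\<lambda>j. if j = i then L else 0)"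
    using bs_good[of n v i s L] mono L by blast
  from allp_good[OF this] obtain R qs where R: "\<forall>l<Suc S. R l \<le> n \<and> (\<forall>q<n. q < R l \<longleftrightarrow> y / b^l \<le> v i (s q))"
    "run (allp (\<lambda>l. bs i s (y / b^l) 0 n) (Suc S) (\<lambda>cs. k (y, cs))) v = run (k (y, R)) v"
    "queries (allp (\<lambda>l. bs i s (y / b^l) 0 n) (Suc S) (\<lambda>cs. k (y, cs))) v = qs @ queries (k (y, R)) v"
    "\<forall>j. length (filter (\<lambda>q. fst q = j) qs) \<le> (\<Sum>l<Suc S. if j = i then L else 0)"
    unfolding goodv_def by blast
  show "\<exists>x qs. PhiA v n b S s i x \<and> run (agentP n b S s i k) v = run (k x) v \<and>
          queries (agentP n b S s i k) v = qs @ queries (k x) v \<and>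
          (\<forall>j. length (filter (\<lambda>q. fst q = j) qs) \<le> (if j = i then Suc (Suc S * L) else 0))"
  proof (intro exI[of _ "(y, R)"] exI[of _ "(i, s 0) # qs"] conjI allI)
    show "PhiA v n b S s i (y, R)" unfolding PhiA_def using R(1) y_def by simp
    show "run (agentP n b S s i k) v = run (k (y, R)) v" unfolding agentP_def using R(2) y_def by simp
    show "queries (agentP n b S s i k) v = ((i, s 0) # qs) @ queries (k (y, R)) v" unfolding agentP_def using R(3) y_def by simp
    fix j
    have "length (filter (\<lambda>q. fst q = j) qs) \<le> (if j = i then Suc S * L else 0)" using R(4)[rule_format, of j] by (cases "j = i") auto
    then show "length (filter (\<lambda>q. fst q = j) ((i, s 0) # qs)) \<le> (if j = i then Suc (Suc S * L) else 0)"
      by (cases "j = i") auto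
  qed
qed

definition est :: "nat \<Rightarrow> real \<Rightarrow> nat \<Rightarrow> (nat \<Rightarrow> nat) \<Rightarrow> (real \<times> (nat \<Rightarrow> nat)) \<Rightarrow> nat \<Rightarrow> real" where
  "est n b S s r j = (let p = inv_into {0..<n} s j in
     if \<exists>l\<le>S. p < snd r l then fst r / b^(LEAST l. p < snd r l) else 0)"

lemma est_props:
  assumes b: "1 \<le> b" and Ph: "PhiA v n b S (\<sigma> i) i r" and con: "consistent_ranking n v \<sigma>"
    and val: "valid_valuation n v" and i: "i < n" and j: "j < n"
  shows "0 \<le> est n b S (\<sigma> i) r j" "est n b S (\<sigma> i) r j \<le> v i j"
    "v i j - fst r / b^S \<le> b * est n b S (\<sigma> i) r j"
proof -
  define p where "p = inv_into {0..<n} (\<sigma> i) j"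
  have bij: "bij_betw (\<sigma> i) {0..<n} {0..<n}" using cons_bij[OF con i] .
  have p: "p < n" "\<sigma> i p = j"
    using bij_betw_inv_into_right[OF bij] bij_betwE[OF bij_betw_inv_into[OF bij]] j unfolding p_def by auto
  have y: "fst r = v i (\<sigma> i 0)" using Ph unfolding PhiA_def by simp
  have y0: "0 \<le> fst r" using y val top_lt[OF con i] i unfolding valid_valuation_def by auto
  have vy: "v i j \<le> fst r" using y top_ge[OF con i j] by simp
  have vj0: "0 \<le> v i j" using val i j unfolding valid_valuation_def by auto
  have bS: "0 \<le> fst r / b^S" using y0 b by simp
  have Phq: "\<And>l. l \<le> S \<Longrightarrow> (p < snd r l \<longleftrightarrow> fst r / b^l \<le> v i j)"
    using Ph p unfolding PhiA_def by auto
  have "0 \<le> est n b S (\<sigma> i) r j \<and> est n b S (\<sigma> i) r j \<le> v i j \<and> v i j - fst r / b^S \<le> b * est n b S (\<sigma> i) r j"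
  proof (cases "\<exists>l\<le>S. p < snd r l")
    case True
    define l0 where "l0 = (LEAST l. p < snd r l)"
    have e: "est n b S (\<sigma> i) r j = fst r / b^l0" unfolding est_def l0_def using True p_def by simp
    obtain l where l: "l \<le> S" "p < snd r l" using True by auto
    have l0: "p < snd r l0" "l0 \<le> l" unfolding l0_def using LeastI[of "\<lambda>l. p < snd r l" l] Least_le[of "\<lambda>l. p < snd r l" l] l by auto
    have l0S: "l0 \<le> S" using l0 l by simp
    have up: "fst r / b^l0 \<le> v i j" using Phq[OF l0S] l0 by simp
    have low: "v i j \<le> b * (fst r / b^l0)"
    proof (cases l0)
      case 0
      have "1 * fst r \<le> b * fst r" using b y0 by (rule mult_right_mono)
      then show ?thesis using vy 0 by simp
    next
      case (Suc l1)
      have "\<not> p < snd r l1" using not_less_Least[of l1 "\<lambda>l. p < snd r l"] Suc unfolding l0_def by auto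
      then have "\<not> fst r / b^l1 \<le> v i j" using Phq[of l1] Suc l0S by simp
      moreover have "b * (fst r / b^l0) = fst r / b^l1" using b Suc by simp
      ultimately show ?thesis by simp
    qed
    have "0 \<le> fst r / b^l0" using y0 b by simp
    moreover have "v i j - fst r / b^S \<le> b * (fst r / b^l0)" using low bS by linarith
    ultimately show ?thesis unfolding e using up by blast
  next
    case False
    have e: "est n b S (\<sigma> i) r j = 0" unfolding est_def Let_def p_def[symmetric] by (rule if_not_P[OF False])
    have "\<not> fst r / b^S \<le> v i j" using False Phq[of S] by simp
    then show ?thesis unfolding e using vj0 by simp
  qed
  then show "0 \<le> est n b S (\<sigma> i) r j" "est n b S (\<sigma> i) r j \<le> v i j"
    "v i j - fst r / b^S \<le> b * est n b S (\<sigma> i) r j" by auto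
qed



definition pickm :: "nat \<Rightarrow> (nat \<Rightarrow> nat \<Rightarrow> real) \<Rightarrow> (nat \<Rightarrow> nat)" where
  "pickm n f = (SOME m. is_matching n m \<and> (\<forall>m'. is_matching n m' \<longrightarrow> (\<Sum>i<n. f i (m' i)) \<le> (\<Sum>i<n. f i (m i))))"

lemma pickm_spec: "is_matching n (pickm n f)" "is_matching n m' \<Longrightarrow> (\<Sum>i<n. f i (m' i)) \<le> (\<Sum>i<n. f i (pickm n f i))"
  using someI_ex[OF best_exists[of n f]] unfolding pickm_def by auto

definition mainA :: "nat \<Rightarrow> real \<Rightarrow> nat \<Rightarrow> (nat \<Rightarrow> nat \<Rightarrow> nat) \<Rightarrow> qalg" where
  "mainA n b S \<sigma> = allp (\<lambda>i. agentP n b S (\<sigma> i) i) n (\<lambda>R. Output (pickm n (\<lambda>i j. est n b S (\<sigma> i) (R i) j)))"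

lemma main_ach:
  assumes b: "1 \<le> b" and bS: "2 * real n \<le> b^S" and L: "n < 2^L"
  shows "achieves n (mainA n b S) (2*b) (Suc (Suc S * L))"
  unfolding achieves_def
proof (intro allI impI)
  fix v \<sigma> assume a: "valid_valuation n v \<and> consistent_ranking n v \<sigma>"
  then have val: "valid_valuation n v" and con: "consistent_ranking n v \<sigma>" by auto
  define c where "c = Suc (Suc S * L)"
  have ag: "goodv v (agentP n b S (\<sigma> l) l) (PhiA v n b S (\<sigma> l) l) (\<lambda>j. if j = l then c else 0)" if "l < n" for l
    using agent_good[where n=n and v=v and i=l and s="\<sigma> l" and L=L and b=b and S=S, OF cons_mono[OF con that] L] unfolding c_def .
  have "\<forall>l<n. goodv v (agentP n b S (\<sigma> l) l) (PhiA v n b S (\<sigma> l) l) (\<lambda>j. if j = l then c else 0)"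
    using ag by blast
  from allp_good[OF this] obtain R qs where R: "\<forall>l<n. PhiA v n b S (\<sigma> l) l (R l)"
    "run (mainA n b S \<sigma>) v = run (Output (pickm n (\<lambda>i j. est n b S (\<sigma> i) (R i) j))) v"
    "queries (mainA n b S \<sigma>) v = qs @ queries (Output (pickm n (\<lambda>i j. est n b S (\<sigma> i) (R i) j))) v"
    "\<forall>j. length (filter (\<lambda>q. fst q = j) qs) \<le> (\<Sum>l<n. if j = l then c else 0)"
    unfolding goodv_def mainA_def by blast
  define w where "w i j = est n b S (\<sigma> i) (R i) j" for i j
  define M where "M = pickm n w"
  have run: "run (mainA n b S \<sigma>) v = M" using R(2) unfolding M_def w_def by simp
  have M: "is_matching n M" unfolding M_def by (rule pickm_spec)
  have g1: "is_matching n (run (mainA n b S \<sigma>) v)" using M run by simp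
  obtain Z where Z: "is_matching n Z" "opt_welfare n v = social_welfare n v Z" using opt_attained by blast
  have ep: "\<And>i j. i < n \<Longrightarrow> j < n \<Longrightarrow> 0 \<le> w i j \<and> w i j \<le> v i j \<and> v i j - v i (\<sigma> i 0) / b^S \<le> b * w i j"
  proof -
    fix i j assume ij: "i < n" "j < n"
    have Ph: "PhiA v n b S (\<sigma> i) i (R i)" using R(1) ij by blast
    have "fst (R i) = v i (\<sigma> i 0)" using Ph unfolding PhiA_def by simp
    then show "0 \<le> w i j \<and> w i j \<le> v i j \<and> v i j - v i (\<sigma> i 0) / b^S \<le> b * w i j"
      using est_props[OF b Ph con val ij] unfolding w_def by simp
  qed
  have bpos: "0 < b^S" using b by simp
  have opt0: "0 \<le> opt_welfare n v" using Z sw_nonneg[OF val] by simp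
  have "(\<Sum>i<n. w i (Z i)) \<le> (\<Sum>i<n. w i (M i))" unfolding M_def by (rule pickm_spec(2)[OF Z(1)])
  also have "\<dots> \<le> social_welfare n v M" unfolding social_welfare_def
    by (rule sum_mono) (use ep matching_lt[OF M] in auto)
  finally have s1: "(\<Sum>i<n. w i (Z i)) \<le> social_welfare n v M" .
  have "opt_welfare n v - (\<Sum>i<n. v i (\<sigma> i 0) / b^S) = (\<Sum>i<n. v i (Z i) - v i (\<sigma> i 0) / b^S)"
    unfolding Z(2) social_welfare_def by (simp add: sum_subtractf)
  also have "\<dots> \<le> (\<Sum>i<n. b * w i (Z i))"
    by (rule sum_mono) (use ep matching_lt[OF Z(1)] in auto)
  also have "\<dots> = b * (\<Sum>i<n. w i (Z i))" by (simp add: sum_distrib_left)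
  finally have s2: "opt_welfare n v - (\<Sum>i<n. v i (\<sigma> i 0) / b^S) \<le> b * (\<Sum>i<n. w i (Z i))" .
  have "(\<Sum>i<n. v i (\<sigma> i 0) / b^S) \<le> (\<Sum>i<(n::nat). opt_welfare n v / b^S)"
    by (rule sum_mono) (use opt_ge_top[OF val con] bpos in \<open>auto simp: divide_right_mono\<close>)
  also have "\<dots> = real n * opt_welfare n v / b^S" by simp
  also have "\<dots> \<le> opt_welfare n v / 2"
  proof -
    have "real n * opt_welfare n v * 2 \<le> b^S * opt_welfare n v" using bS opt0
      by (metis mult.commute mult.left_commute mult_right_mono)
    then show ?thesis using bpos by (simp add: field_simps)
  qed
  finally have s3: "(\<Sum>i<n. v i (\<sigma> i 0) / b^S) \<le> opt_welfare n v / 2" .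
  have "b * (\<Sum>i<n. w i (Z i)) \<le> b * social_welfare n v M" using s1 b by simp
  then have g2: "opt_welfare n v \<le> 2 * b * social_welfare n v (run (mainA n b S \<sigma>) v)"
    using s2 s3 run by simp
  have g3: "real (queries_to (mainA n b S \<sigma>) v j) \<le> real (Suc (Suc S * L))" for j
  proof -
    have "queries_to (mainA n b S \<sigma>) v j = length (filter (\<lambda>q. fst q = j) qs)"
      using R(3) unfolding queries_to_def by simp
    also have "\<dots> \<le> c" using R(4) sum_delta_le[where n=n and j=j and c=c] by (meson le_trans)
    finally have "queries_to (mainA n b S \<sigma>) v j \<le> Suc (Suc S * L)" unfolding c_def .
    then show ?thesis by (simp only: of_nat_le_iff)
  qed
  show "is_matching n (run (mainA n b S \<sigma>) v) \<and> opt_welfare n v \<le> 2 * b * social_welfare n v (run (mainA n b S \<sigma>) v) \<and>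
      (\<forall>i. real (queries_to (mainA n b S \<sigma>) v i) \<le> real (Suc (Suc S * L)))"
    using g1 g2 g3 by blast
qed



lemma achieves_mono:
  assumes "achieves n A d q" "d \<le> d'" "q \<le> q'"
  shows "achieves n A d' q'"
  unfolding achieves_def
proof (intro allI impI conjI)
  fix v \<sigma> assume a: "valid_valuation n v \<and> consistent_ranking n v \<sigma>"
  have h: "is_matching n (run (A \<sigma>) v)" "opt_welfare n v \<le> d * social_welfare n v (run (A \<sigma>) v)"
    "\<forall>i. real (queries_to (A \<sigma>) v i) \<le> q" using assms(1) a unfolding achieves_def by auto
  show "is_matching n (run (A \<sigma>) v)" using h(1) .
  have "0 \<le> social_welfare n v (run (A \<sigma>) v)" using sw_nonneg h(1) a by blast
  then have "d * social_welfare n v (run (A \<sigma>) v) \<le> d' * social_welfare n v (run (A \<sigma>) v)"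
    using assms(2) by (rule mult_right_mono[rotated])
  then show "opt_welfare n v \<le> d' * social_welfare n v (run (A \<sigma>) v)" using h(2) by linarith
  fix i show "real (queries_to (A \<sigma>) v i) \<le> q'" using h(3) assms(3) by (meson order_trans)
qed

definition Lf :: "nat \<Rightarrow> nat" where "Lf n = nat \<lceil>log 2 (real n)\<rceil> + 1"

lemma ln2_half: "1/2 \<le> ln (2::real)"
proof -
  have "exp (1/2) \<le> (2::real)" by (rule exp_half_le2)
  then show ?thesis using ln_le_cancel_iff[of "exp (1/2)" 2] by simp
qed

lemma Lf_props:
  assumes n: "2 \<le> n"
  shows "n < 2 ^ Lf n" "real (Lf n) \<le> 6 * ln (real n)" "1/2 \<le> ln (real n)"
proof -
  have n0: "0 < real n" using n by simp
  have "log 2 2 \<le> log 2 (real n)" using n by (subst log_le_cancel_iff) auto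
  then have lg1: "1 \<le> log 2 (real n)" by simp
  have c0: "0 \<le> \<lceil>log 2 (real n)\<rceil>" using lg1 by linarith
  have "real n = 2 powr (log 2 (real n))" using n0 by simp
  also have "\<dots> \<le> 2 powr (real_of_int \<lceil>log 2 (real n)\<rceil>)" by (rule powr_mono) auto
  also have "\<dots> = 2 powr (real (nat \<lceil>log 2 (real n)\<rceil>))" using c0 by simp
  also have "\<dots> = 2 ^ (nat \<lceil>log 2 (real n)\<rceil>)" by (rule powr_realpow) simp
  finally have "real n \<le> 2 ^ (nat \<lceil>log 2 (real n)\<rceil>)" .
  moreover have "(2::real)^Lf n = 2 * 2 ^ nat \<lceil>log 2 (real n)\<rceil>" unfolding Lf_def by simp
  moreover have "(0::real) < 2 ^ nat \<lceil>log 2 (real n)\<rceil>" by simp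
  ultimately have "real n < 2 ^ Lf n" by linarith
  then show "n < 2 ^ Lf n" using of_nat_less_iff[of n "2^Lf n", where 'a=real] by simp
  have ln2: "1/2 \<le> ln (2::real)" by (rule ln2_half)
  have lnn: "ln 2 \<le> ln (real n)" using n by simp
  show "1/2 \<le> ln (real n)" using ln2 lnn by linarith
  have "real (Lf n) = real_of_int \<lceil>log 2 (real n)\<rceil> + 1" using c0 unfolding Lf_def by simp
  also have "\<dots> \<le> log 2 (real n) + 2" using of_int_ceiling_le_add_one[of "log 2 (real n)"] by linarith
  finally have "real (Lf n) \<le> log 2 (real n) + 2" .
  also have "\<dots> \<le> 3 * log 2 (real n)" using lg1 by linarith
  also have "\<dots> = 3 * ln (real n) / ln 2" by (simp add: log_def)
  also have "\<dots> \<le> 6 * ln (real n)"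
  proof -
    have l0: "0 \<le> 6 * ln (real n)" using n by simp
    have "6 * ln (real n) * (1/2) \<le> 6 * ln (real n) * ln 2" using ln2 l0 by (rule mult_left_mono)
    then have "3 * ln (real n) \<le> 6 * ln (real n) * ln 2" by simp
    then show ?thesis by (simp add: divide_le_eq)
  qed
  finally show "real (Lf n) \<le> 6 * ln (real n)" .
qed

lemma part3: "\<exists>(C::real) (D::real) (N::nat) (A :: nat \<Rightarrow> (nat \<Rightarrow> nat \<Rightarrow> nat) \<Rightarrow> qalg).
            \<forall>n\<ge>N. achieves n (A n) C (D * (ln (real n))\<^sup>2)"
proof (intro exI allI impI)
  fix n :: nat assume n: "2 \<le> n"
  define L where "L = Lf n"
  note LP = Lf_props[OF n, folded L_def]
  define x where "x = ln (real n)"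
  have x: "1/2 \<le> x" "real L \<le> 6 * x" using LP unfolding x_def by auto
  have "real n < real (2 ^ L)" using LP(1) by (simp only: of_nat_less_iff)
  then have "2 * real n \<le> 2 * 2 ^ L" by simp
  then have bS: "2 * real n \<le> 2 ^ Suc L" by simp
  have ach: "achieves n (mainA n 2 (Suc L)) (2*2) (Suc (Suc (Suc L) * L))"
    by (rule main_ach) (use bS LP(1) in auto)
  have q: "real (Suc (Suc (Suc L) * L)) \<le> 64 * x^2"
  proof -
    have e: "real (Suc (Suc (Suc L) * L)) = 1 + (real L + 2) * real L" by (simp add: algebra_simps)
    have "(real L + 2) * real L \<le> (10 * x) * (6 * x)" by (rule mult_mono) (use x in auto)
    moreover have "(1/2) * (1/2) \<le> x * x" using x(1) by (intro mult_mono) auto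
    then have "1/4 \<le> x^2" by (simp add: power2_eq_square)
    ultimately show ?thesis unfolding e by (simp add: power2_eq_square)
  qed
  show "achieves n (mainA n 2 (Suc (Lf n))) 4 (64 * (ln (real n))\<^sup>2)"
    using achieves_mono[OF ach _ q] unfolding x_def L_def by simp
qed

lemma part2: "k \<ge> 1 \<Longrightarrow> \<exists>(C::real) (D::real) (N::nat) (A :: nat \<Rightarrow> (nat \<Rightarrow> nat \<Rightarrow> nat) \<Rightarrow> qalg).
               \<forall>n\<ge>N. achieves n (A n) (C * real n powr (1 / real k)) (D * ln (real n))"
proof (intro exI allI impI)
  fix n :: nat assume k: "k \<ge> 1" and n: "2^k \<le> n"
  have "(2::nat)^1 \<le> 2^k" using k by (intro power_increasing) auto
  then have n2: "2 \<le> n" using n by simp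
  define L where "L = Lf n"
  note LP = Lf_props[OF n2, folded L_def]
  define x where "x = ln (real n)"
  have x: "1/2 \<le> x" "real L \<le> 6 * x" using LP unfolding x_def by auto
  define b where "b = real n powr (1 / real k)"
  have n0: "0 < real n" using n2 by simp
  have bk: "b ^ k = real n" unfolding b_def using n0 k by (simp add: powr_power)
  have b0: "0 \<le> b" unfolding b_def by simp
  have b2: "2 \<le> b"
  proof (rule ccontr)
    assume "\<not> 2 \<le> b"
    then have "b ^ k < 2 ^ k" using b0 k by (intro power_strict_mono) auto
    then have "real n < 2 ^ k" using bk by simp
    moreover have "real (2 ^ k) \<le> real n" using n by (simp only: of_nat_le_iff)
    then have "(2::real) ^ k \<le> real n" by simp
    ultimately show False by simp
  qed
  have "2 * real n \<le> b * real n" using b2 n0 by (intro mult_right_mono) auto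
  then have bS: "2 * real n \<le> b ^ Suc k" using bk by simp
  have ach: "achieves n (mainA n b (Suc k)) (2*b) (Suc (Suc (Suc k) * L))"
    by (rule main_ach) (use bS LP(1) b2 in auto)
  have q: "real (Suc (Suc (Suc k) * L)) \<le> (2 + 6 * (real k + 2)) * x"
  proof -
    have e: "real (Suc (Suc (Suc k) * L)) = 1 + (real k + 2) * real L" by (simp add: algebra_simps)
    have "(real k + 2) * real L \<le> (real k + 2) * (6 * x)" by (rule mult_left_mono) (use x in auto)
    then show ?thesis unfolding e using x(1) by (simp add: algebra_simps)
  qed
  show "achieves n (mainA n (real n powr (1 / real k)) (Suc k)) (2 * real n powr (1 / real k)) ((2 + 6 * (real k + 2)) * ln (real n))"
    using achieves_mono[OF ach _ q] unfolding x_def b_def by simp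
qed

lemma part1: "\<exists>(C::real) (N::nat) (A :: nat \<Rightarrow> (nat \<Rightarrow> nat \<Rightarrow> nat) \<Rightarrow> qalg).
            \<forall>n\<ge>N. achieves n (A n) (C * real n) 1"
  by (intro exI[of _ 1] exI[of _ 1] exI[of _ topA]) (simp add: topA_ach)

theorem mainTheorem3:
  shows "(\<exists>(C::real) (N::nat) (A :: nat \<Rightarrow> (nat \<Rightarrow> nat \<Rightarrow> nat) \<Rightarrow> qalg).
            \<forall>n\<ge>N. achieves n (A n) (C * real n) 1)
       \<and> (\<forall>k::nat. k \<ge> 1 \<longrightarrow>
            (\<exists>(C::real) (D::real) (N::nat) (A :: nat \<Rightarrow> (nat \<Rightarrow> nat \<Rightarrow> nat) \<Rightarrow> qalg).
               \<forall>n\<ge>N. achieves n (A n) (C * real n powr (1 / real k)) (D * ln (real n))))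
       \<and> (\<exists>(C::real) (D::real) (N::nat) (A :: nat \<Rightarrow> (nat \<Rightarrow> nat \<Rightarrow> nat) \<Rightarrow> qalg).
            \<forall>n\<ge>N. achieves n (A n) C (D * (ln (real n))\<^sup>2))"
  using part1 part2 part3 by blast

end
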